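(* Let $(\Delta x,\Delta y)\in\mathbb{R}^2$, $(o_x,o_y)\in\mathbb{R}^2$, $(x_0,y_0,\theta_0)\in\mathbb{R}^3$ and $t_{\max}>0$. Consider the straight robot path $x(t)=x_0+t\cos\theta_0$, $y(t)=y_0+t\sin\theta_0$, $\theta(t)=\theta_0$ for $t\in[0,t_{\max}]$, and let the anchoring point have world coordinates $\tilde x(t)=x(t)+\cos\theta(t)\Delta x-\sin\theta(t)\Delta y$, $\tilde y(t)=y(t)+\sin\theta(t)\Delta x+\cos\theta(t)\Delta y$. Assume $(\tilde x(t),\tilde y(t))\neq(o_x,o_y)$ for all $t$. Then the relative angle function $$\Phi(t)=\arctan\left(\frac{o_y-\tilde y(t)}{o_x-\tilde x(t)}\right)-\theta(t)$$ is monotonic on $(0,t_{\max})$.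
   Context: $(\Delta x,\Delta y)$ is the position of the tether–robot anchoring point $s$ in the robot's egocentric frame, and $(o_x,o_y)$ is the (fixed) position of the last tether–obstacle contact point $o$ in the world frame. In the relative angle function, $\arctan\left(\frac{o_y-\tilde y}{o_x-\tilde x}\right)$ denotes the direction angle of the vector from $(\tilde x,\tilde y)$ to $(o_x,o_y)$, taken as a continuous (differentiable) branch along the path, whose derivative is $\frac{-\tilde y'(o_x-\tilde x)+\tilde x'(o_y-\tilde y)}{(o_x-\tilde x)^2+(o_y-\tilde y)^2}$. *)

theory Defs
  imports "HOL-Analysis.Analysis"
begin

definition path_x :: "real \<Rightarrow> real \<Rightarrow> real \<Rightarrow> real" where
  "path_x x0 th0 t = x0 + t * cos th0"

definition path_y :: "real \<Rightarrow> real \<Rightarrow> real \<Rightarrow> real" where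
  "path_y y0 th0 t = y0 + t * sin th0"

definition anchor_x :: "real \<Rightarrow> real \<Rightarrow> real \<Rightarrow> real \<Rightarrow> real \<Rightarrow> real" where
  "anchor_x dx dy x0 th0 t = path_x x0 th0 t + cos th0 * dx - sin th0 * dy"

definition anchor_y :: "real \<Rightarrow> real \<Rightarrow> real \<Rightarrow> real \<Rightarrow> real \<Rightarrow> real" where
  "anchor_y dx dy y0 th0 t = path_y y0 th0 t + sin th0 * dx + cos th0 * dy"

end

theory Submission
  imports Defs
begin

lemma incr_lemma:
  fixes f :: "real \<Rightarrow> real"
  assumes cont: "continuous_on {a..b} f" and inj: "inj_on f {a..b}" and ab: "f a < f b"
  shows "\<forall>s\<in>{a..b}. \<forall>t\<in>{a..b}. s < t \<longrightarrow> f s < f t"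
proof (intro ballI impI)
  fix s t assume s: "s \<in> {a..b}" and t: "t \<in> {a..b}" and st: "s < t"
  have fat: "f a < f t'" if "t' \<in> {a<..b}" for t'
  proof (cases "t' = b")
    case True then show ?thesis using ab by simp
  next
    case False
    then have "a < t'" "t' < b" using that by auto
    from continuous_inj_imp_mono[OF this cont inj] ab show ?thesis by auto
  qed
  show "f s < f t"
  proof (cases "s = a")
    case True then show ?thesis using fat t st by auto
  next
    case False
    then have "a < s" "s < t" using s st by auto
    moreover have "continuous_on {a..t} f" using cont t by (auto intro: continuous_on_subset)
    moreover have "inj_on f {a..t}" using inj t by (auto intro: inj_on_subset)
    ultimately have "(f a < f s \<and> f s < f t) \<or> (f t < f s \<and> f s < f a)"
      by (rule continuous_inj_imp_mono)
    moreover have "f a < f t" using fat t st s by auto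
    ultimately show ?thesis by auto
  qed
qed

lemma mono_lemma:
  fixes f :: "real \<Rightarrow> real"
  assumes cont: "continuous_on {a..b} f" and inj: "inj_on f {a..b}" and ab: "a < b"
  shows "(\<forall>s\<in>{a..b}. \<forall>t\<in>{a..b}. s < t \<longrightarrow> f s < f t) \<or>
         (\<forall>s\<in>{a..b}. \<forall>t\<in>{a..b}. s < t \<longrightarrow> f s > f t)"
proof -
  have "f a \<noteq> f b"
  proof
    assume "f a = f b"
    moreover have "a \<in> {a..b}" "b \<in> {a..b}" using ab by auto
    ultimately have "a = b" using inj by (auto dest: inj_onD)
    then show False using ab by simp
  qed
  then consider "f a < f b" | "f a > f b" by linarith
  then show ?thesis
  proof cases
    case 1 then show ?thesis using incr_lemma[OF cont inj] by blast
  next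
    case 2
    have c2: "continuous_on {a..b} (\<lambda>x. - f x)" using cont by (intro continuous_intros)
    have i2: "inj_on (\<lambda>x. - f x) {a..b}" using inj by (auto simp: inj_on_def)
    from incr_lemma[OF c2 i2] 2 show ?thesis by auto
  qed
qed

lemma open_mono:
  fixes f :: "real \<Rightarrow> real"
  assumes cont: "continuous_on {l<..<u} f" and inj: "inj_on f {l<..<u}"
    and s: "s \<in> {l<..<u}" and t: "t \<in> {l<..<u}" and s': "s' \<in> {l<..<u}" and t': "t' \<in> {l<..<u}"
    and st: "s < t" and st': "s' < t'" and fst: "f s < f t"
  shows "f s' < f t'"
proof -
  define a where "a = min s s'"
  define b where "b = max t t'"
  have sub: "{a..b} \<subseteq> {l<..<u}" using s t s' t' by (auto simp: a_def b_def)
  have ab: "a < b" using st by (auto simp: a_def b_def)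
  have "(\<forall>x\<in>{a..b}. \<forall>y\<in>{a..b}. x < y \<longrightarrow> f x < f y) \<or>
         (\<forall>x\<in>{a..b}. \<forall>y\<in>{a..b}. x < y \<longrightarrow> f x > f y)"
    using mono_lemma[OF continuous_on_subset[OF cont sub] inj_on_subset[OF inj sub] ab] .
  moreover have "s \<in> {a..b}" "t \<in> {a..b}" "s' \<in> {a..b}" "t' \<in> {a..b}"
    using st st' by (auto simp: a_def b_def)
  ultimately show ?thesis using st st' fst
  proof (elim disjE)
    assume "\<forall>x\<in>{a..b}. \<forall>y\<in>{a..b}. x < y \<longrightarrow> f x < f y"
    then show ?thesis using \<open>s' \<in> {a..b}\<close> \<open>t' \<in> {a..b}\<close> st' by blast
  next
    assume "\<forall>x\<in>{a..b}. \<forall>y\<in>{a..b}. x < y \<longrightarrow> f y < f x"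
    then have "f t < f s" using \<open>s \<in> {a..b}\<close> \<open>t \<in> {a..b}\<close> st by blast
    then show ?thesis using fst by simp
  qed
qed

theorem theorem1:
  fixes dx dy ox oy x0 y0 th0 tmax :: real
    and phi :: "real \<Rightarrow> real"
  assumes tmax_pos: "tmax > 0"
    and nonzero: "\<And>t. t \<in> {0..tmax} \<Longrightarrow>
         (anchor_x dx dy x0 th0 t, anchor_y dx dy y0 th0 t) \<noteq> (ox, oy)"
    and phi_cont: "continuous_on {0<..<tmax} phi"
    and phi_cos: "\<And>t. t \<in> {0<..<tmax} \<Longrightarrow>
         ox - anchor_x dx dy x0 th0 t =
           sqrt ((ox - anchor_x dx dy x0 th0 t)\<^sup>2 + (oy - anchor_y dx dy y0 th0 t)\<^sup>2) * cos (phi t)"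
    and phi_sin: "\<And>t. t \<in> {0<..<tmax} \<Longrightarrow>
         oy - anchor_y dx dy y0 th0 t =
           sqrt ((ox - anchor_x dx dy x0 th0 t)\<^sup>2 + (oy - anchor_y dx dy y0 th0 t)\<^sup>2) * sin (phi t)"
  shows "(\<forall>s\<in>{0<..<tmax}. \<forall>t\<in>{0<..<tmax}. s \<le> t \<longrightarrow> phi s - th0 \<le> phi t - th0)
       \<or> (\<forall>s\<in>{0<..<tmax}. \<forall>t\<in>{0<..<tmax}. s \<le> t \<longrightarrow> phi s - th0 \<ge> phi t - th0)"
proof -
  define I where "I = {0<..<tmax}"
  define Bx where "Bx = ox - x0 - cos th0 * dx + sin th0 * dy"
  define By where "By = oy - y0 - sin th0 * dx - cos th0 * dy"
  define c where "c = cos th0 * By - sin th0 * Bx"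
  define X where "X t = ox - anchor_x dx dy x0 th0 t" for t
  define Y where "Y t = oy - anchor_y dx dy y0 th0 t" for t
  define r where "r t = sqrt ((X t)\<^sup>2 + (Y t)\<^sup>2)" for t
  have Xe: "X t = Bx - t * cos th0" for t
    by (simp add: X_def Bx_def anchor_x_def path_x_def)
  have Ye: "Y t = By - t * sin th0" for t
    by (simp add: Y_def By_def anchor_y_def path_y_def)
  have rpos: "r t > 0" if "t \<in> I" for t
  proof -
    have "X t \<noteq> 0 \<or> Y t \<noteq> 0" using nonzero[of t] that by (auto simp: I_def X_def Y_def)
    then have "(X t)\<^sup>2 + (Y t)\<^sup>2 > 0" by (simp add: sum_power2_gt_zero_iff)
    then show ?thesis by (simp add: r_def)
  qed
  have cosI: "X t = r t * cos (phi t)" if "t \<in> I" for t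
  proof -
    have "t \<in> {0<..<tmax}" using that by (simp add: I_def)
    from phi_cos[OF this] show ?thesis unfolding X_def Y_def r_def .
  qed
  have sinI: "Y t = r t * sin (phi t)" if "t \<in> I" for t
  proof -
    have "t \<in> {0<..<tmax}" using that by (simp add: I_def)
    from phi_sin[OF this] show ?thesis unfolding X_def Y_def r_def .
  qed
  have cross: "X t1 * Y t2 - Y t1 * X t2 = (t2 - t1) * c" for t1 t2
    unfolding Xe Ye c_def by (simp add: algebra_simps)
  have key: "r t1 * r t2 * sin (phi t2 - phi t1) = (t2 - t1) * c" if "t1 \<in> I" "t2 \<in> I" for t1 t2
  proof -
    have e: "X t1 * Y t2 - Y t1 * X t2 = (r t1 * cos (phi t1)) * (r t2 * sin (phi t2))
        - (r t1 * sin (phi t1)) * (r t2 * cos (phi t2))"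
      by (simp only: cosI[OF that(1)] cosI[OF that(2)] sinI[OF that(1)] sinI[OF that(2)])
    have "(r t1 * cos (phi t1)) * (r t2 * sin (phi t2))
        - (r t1 * sin (phi t1)) * (r t2 * cos (phi t2)) = r t1 * r t2 * sin (phi t2 - phi t1)"
      by (simp add: sin_diff algebra_simps)
    then have "r t1 * r t2 * sin (phi t2 - phi t1) = X t1 * Y t2 - Y t1 * X t2" using e by simp
    then show ?thesis using cross by simp
  qed
  show ?thesis
  proof (cases "c = 0")
    case True
    have const: "phi s = phi t" if s: "s \<in> I" and t: "t \<in> I" and st: "s \<le> t" for s t
    proof (rule ccontr)
      assume ne: "phi s \<noteq> phi t"
      have contst: "continuous_on {s..t} phi"
        using phi_cont s t by (auto simp: I_def intro: continuous_on_subset)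
      have sub: "{s..t} \<subseteq> I" using s t by (auto simp: I_def)
      define d where "d = min (pi/2) (\<bar>phi t - phi s\<bar> / 2)"
      have d: "0 < d" "d < pi" "d < \<bar>phi t - phi s\<bar>" 
      proof -
        have "\<bar>phi t - phi s\<bar> > 0" using ne by simp
        then show "0 < d" "d < pi" "d < \<bar>phi t - phi s\<bar>" using pi_gt_zero pi_gt3
          unfolding d_def by (simp_all add: min_def)
      qed
      have "\<exists>x\<in>{s..t}. sin (phi x - phi s) \<noteq> 0"
      proof (cases "phi s < phi t")
        case True
        have l1: "phi s \<le> phi s + d" using d(1) by simp
        have l2: "phi s + d \<le> phi t" using d(3) True by simp
        obtain x where x: "s \<le> x" "x \<le> t" "phi x = phi s + d"
          using IVT'[OF l1 l2 st contst] by blast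
        have "sin (phi x - phi s) = sin d" using x(3) by simp
        then have "sin (phi x - phi s) \<noteq> 0" using sin_gt_zero[of d] d by simp
        moreover have "x \<in> {s..t}" using x(1,2) by simp
        ultimately show ?thesis by blast
      next
        case False
        have l1: "phi t \<le> phi s - d" using d(3) False by simp
        have l2: "phi s - d \<le> phi s" using d(1) by simp
        obtain x where x: "s \<le> x" "x \<le> t" "phi x = phi s - d"
          using IVT2'[OF l1 l2 st contst] by blast
        have "sin (phi x - phi s) = - sin d" using x(3) by simp
        then have "sin (phi x - phi s) \<noteq> 0" using sin_gt_zero[of d] d by simp
        moreover have "x \<in> {s..t}" using x(1,2) by simp
        ultimately show ?thesis by blast
      qed
      then obtain x where x: "x \<in> {s..t}" "sin (phi x - phi s) \<noteq> 0" by blast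
      have "x \<in> I" using x sub by auto
      from key[OF s this] True have "r s * r x * sin (phi x - phi s) = 0" by simp
      with rpos[OF s] rpos[OF \<open>x \<in> I\<close>] x show False by simp
    qed
    have "phi s - th0 \<le> phi t - th0" if "s \<in> I" "t \<in> I" "s \<le> t" for s t
      using const[OF that] by simp
    then show ?thesis unfolding I_def by blast
  next
    case False
    have inj: "inj_on phi I"
    proof (rule inj_onI)
      fix t1 t2 assume "t1 \<in> I" "t2 \<in> I" "phi t1 = phi t2"
      with key[of t1 t2] False show "t1 = t2" by simp
    qed
    show ?thesis
    proof (cases "\<exists>s\<in>I. \<exists>t\<in>I. s < t \<and> phi s < phi t")
      case True
      then obtain s t where stI: "s \<in> I" "t \<in> I" "s < t" "phi s < phi t" by blast
      have lt: "phi s' < phi t'" if "s' \<in> I" "t' \<in> I" "s' < t'" for s' t'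
        by (rule open_mono[OF phi_cont inj[unfolded I_def]])
           (use stI that in \<open>simp_all add: I_def\<close>)
      have "phi s' \<le> phi t'" if "s' \<in> I" "t' \<in> I" "s' \<le> t'" for s' t'
      proof (cases "s' = t'")
        case True then show ?thesis by simp
      next
        case False then show ?thesis using lt[of s' t'] that by simp
      qed
      then have "\<forall>s\<in>I. \<forall>t\<in>I. s \<le> t \<longrightarrow> phi s \<le> phi t" by blast
      then show ?thesis unfolding I_def by auto
    next
      case False
      have "phi s' \<ge> phi t'" if "s' \<in> I" "t' \<in> I" "s' \<le> t'" for s' t'
      proof (cases "s' = t'")
        case True then show ?thesis by simp
      next
        case False then have "s' < t'" using that by simp
        then have "\<not> phi s' < phi t'"
          using that \<open>\<not> (\<exists>s\<in>I. \<exists>t\<in>I. s < t \<and> phi s < phi t)\<close> by blast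
        then show ?thesis by simp
      qed
      then have "\<forall>s\<in>I. \<forall>t\<in>I. s \<le> t \<longrightarrow> phi s \<ge> phi t" by blast
      then show ?thesis unfolding I_def by auto
    qed
  qed
qed

end
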